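(* Let $R$ be a commutative filtered ring and let $(M[i],\mu_i)$ be a compact-continuous-Hausdorff ray-representation, and let $i\in\mathbb{N}$. Then: (1) if $m\in M[i+1]$, then $\widetilde{\mu}_{i+1}m$ is closed in $M[i]$, and it is a linear variety if it is non-empty; (2) if $N$ is a closed submodule of $M[i+1]$, then $\widetilde{\mu}_{i+1}N$ is a closed submodule of $M[i]$. Consequently, $\bigcap_{i\ge0}\widetilde{\mu}_{\le i}M[i]$ equals the set of $m\in M[0]$ for which there exists $(m_i)\in\prod_{i\ge0}M[i]$ with $m_0=m$ and $(m_i,m_{i-1})\in\widetilde{\mu}_i$ for all $i>0$.
   Context: $R$ is filtered by a descending chain of ideals $R_n$ ($n\ge0$) with $R_pR_q\subseteq R_{p+q}$; a filtered $R$-module $M$ has a descending chain of submodules $M_n$ with $R_pM_q\subseteq M_{p+q}$, and carries the topology where the sets $m+M_n$ form a fundamental system of neighbourhoods of $m$. A linear variety is a coset $m+N$ of a submodule; $M$ is linearly compact if every family of closed linear varieties with the finite intersection property has nonempty intersection. A ray-representation: $R$-modules $M[i]$ ($i\ge0$) and, for $i\ge1$, a sign $\sigma_i\in\{+,-\}$ and an $R$-linear map $\mu_i\colon M[i]\to M[i-1]$ if $\sigma_i=-$, $\mu_i\colon M[i-1]\to M[i]$ if $\sigma_i=+$ (the restriction of a binary-tree diagram to a ray). It is compact-continuous-Hausdorff if each $M[i]$ is filtered and linearly compact, each $\mu_i$ is continuous, and $\bigcap_nM_n[i]=0$. The relation $\widetilde{\mu}_i\subseteq M[i]\oplus M[i-1]$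 is $\{(x,\mu_i(x)):x\in M[i]\}$ if $\sigma_i=-$ and $\{(\mu_i(y),y):y\in M[i-1]\}$ if $\sigma_i=+$; for $x\in M[i]$, $\widetilde{\mu}_ix=\{y:(x,y)\in\widetilde{\mu}_i\}$ and $\widetilde{\mu}_iS=\bigcup_{x\in S}\widetilde{\mu}_ix$. For $S\subseteq M[n]$, $\widetilde{\mu}_{\le n}S$ is the set of $m_0\in M[0]$ for which there exist $m_i\in M[i]$ ($1\le i\le n$) with $m_n\in S$ and $(m_i,m_{i-1})\in\widetilde{\mu}_i$; $\widetilde{\mu}_{\le0}S=S$. *)

theory Defs
  imports "HOL-Algebra.Module" "HOL-Algebra.Ideal"
begin

definition filtered_ring :: "'r ring \<Rightarrow> (nat \<Rightarrow> 'r set) \<Rightarrow> bool" where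
  "filtered_ring R Rf \<longleftrightarrow> cring R \<and> (\<forall>n. ideal (Rf n) R) \<and> (\<forall>n. Rf (Suc n) \<subseteq> Rf n) \<and>
     (\<forall>p q. \<forall>a\<in>Rf p. \<forall>b\<in>Rf q. a \<otimes>\<^bsub>R\<^esub> b \<in> Rf (p + q))"

definition filtered_module ::
  "'r ring \<Rightarrow> (nat \<Rightarrow> 'r set) \<Rightarrow> ('r, 'm) module \<Rightarrow> (nat \<Rightarrow> 'm set) \<Rightarrow> bool" where
  "filtered_module R Rf M Mf \<longleftrightarrow> module R M \<and> (\<forall>n. submodule (Mf n) R M) \<and>
     (\<forall>n. Mf (Suc n) \<subseteq> Mf n) \<and>
     (\<forall>p q. \<forall>a\<in>Rf p. \<forall>x\<in>Mf q. a \<odot>\<^bsub>M\<^esub> x \<in> Mf (p + q))"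

definition coset_of :: "('r, 'm) module \<Rightarrow> 'm \<Rightarrow> 'm set \<Rightarrow> 'm set" where
  "coset_of M x N = (\<lambda>y. x \<oplus>\<^bsub>M\<^esub> y) ` N"

definition fm_open :: "('r, 'm) module \<Rightarrow> (nat \<Rightarrow> 'm set) \<Rightarrow> 'm set \<Rightarrow> bool" where
  "fm_open M Mf U \<longleftrightarrow> U \<subseteq> carrier M \<and> (\<forall>x\<in>U. \<exists>n. coset_of M x (Mf n) \<subseteq> U)"

definition fm_closed :: "('r, 'm) module \<Rightarrow> (nat \<Rightarrow> 'm set) \<Rightarrow> 'm set \<Rightarrow> bool" where
  "fm_closed M Mf S \<longleftrightarrow> S \<subseteq> carrier M \<and> fm_open M Mf (carrier M - S)"

definition fm_continuous ::
  "('r, 'm) module \<Rightarrow> (nat \<Rightarrow> 'm set) \<Rightarrow> ('r, 'm) module \<Rightarrow> (nat \<Rightarrow> 'm set) \<Rightarrow> ('m \<Rightarrow> 'm) \<Rightarrow> bool" where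
  "fm_continuous M Mf N Nf f \<longleftrightarrow>
     (\<forall>U. fm_open N Nf U \<longrightarrow> fm_open M Mf {x \<in> carrier M. f x \<in> U})"

definition linear_variety :: "'r ring \<Rightarrow> ('r, 'm) module \<Rightarrow> 'm set \<Rightarrow> bool" where
  "linear_variety R M S \<longleftrightarrow> (\<exists>x\<in>carrier M. \<exists>N. submodule N R M \<and> S = coset_of M x N)"

definition linearly_compact :: "'r ring \<Rightarrow> ('r, 'm) module \<Rightarrow> (nat \<Rightarrow> 'm set) \<Rightarrow> bool" where
  "linearly_compact R M Mf \<longleftrightarrow>
     (\<forall>F. (\<forall>S\<in>F. fm_closed M Mf S \<and> linear_variety R M S) \<and>
          (\<forall>G. G \<subseteq> F \<and> finite G \<and> G \<noteq> {} \<longrightarrow> \<Inter>G \<noteq> {}) \<longrightarrow> \<Inter>F \<noteq> {})"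

definition linear_map :: "'r ring \<Rightarrow> ('r, 'm) module \<Rightarrow> ('r, 'm) module \<Rightarrow> ('m \<Rightarrow> 'm) \<Rightarrow> bool" where
  "linear_map R M N f \<longleftrightarrow> f \<in> carrier M \<rightarrow> carrier N \<and>
     (\<forall>x\<in>carrier M. \<forall>y\<in>carrier M. f (x \<oplus>\<^bsub>M\<^esub> y) = f x \<oplus>\<^bsub>N\<^esub> f y) \<and>
     (\<forall>a\<in>carrier R. \<forall>x\<in>carrier M. f (a \<odot>\<^bsub>M\<^esub> x) = a \<odot>\<^bsub>N\<^esub> f x)"

(* Ray-representation: modules M i; for i \<ge> 1 a sign \<sigma> i (True = +, False = -) and a linear map
   \<mu> i : M i \<rightarrow> M (i-1) if \<sigma> i = -, \<mu> i : M (i-1) \<rightarrow> M i if \<sigma> i = +. *)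
definition ray_rep ::
  "'r ring \<Rightarrow> (nat \<Rightarrow> ('r, 'm) module) \<Rightarrow> (nat \<Rightarrow> bool) \<Rightarrow> (nat \<Rightarrow> 'm \<Rightarrow> 'm) \<Rightarrow> bool" where
  "ray_rep R M \<sigma> \<mu> \<longleftrightarrow> (\<forall>i. module R (M i)) \<and>
     (\<forall>i\<ge>1. if \<sigma> i then linear_map R (M (i - 1)) (M i) (\<mu> i)
             else linear_map R (M i) (M (i - 1)) (\<mu> i))"

definition cch_ray_rep ::
  "'r ring \<Rightarrow> (nat \<Rightarrow> 'r set) \<Rightarrow> (nat \<Rightarrow> ('r, 'm) module) \<Rightarrow> (nat \<Rightarrow> nat \<Rightarrow> 'm set) \<Rightarrow>
   (nat \<Rightarrow> bool) \<Rightarrow> (nat \<Rightarrow> 'm \<Rightarrow> 'm) \<Rightarrow> bool" where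
  "cch_ray_rep R Rf M Mf \<sigma> \<mu> \<longleftrightarrow> ray_rep R M \<sigma> \<mu> \<and>
     (\<forall>i. filtered_module R Rf (M i) (Mf i) \<and> linearly_compact R (M i) (Mf i) \<and>
          (\<Inter>n. Mf i n) = {\<zero>\<^bsub>M i\<^esub>}) \<and>
     (\<forall>i\<ge>1. if \<sigma> i then fm_continuous (M (i - 1)) (Mf (i - 1)) (M i) (Mf i) (\<mu> i)
             else fm_continuous (M i) (Mf i) (M (i - 1)) (Mf (i - 1)) (\<mu> i))"

definition mu_rel ::
  "(nat \<Rightarrow> ('r, 'm) module) \<Rightarrow> (nat \<Rightarrow> bool) \<Rightarrow> (nat \<Rightarrow> 'm \<Rightarrow> 'm) \<Rightarrow> nat \<Rightarrow> ('m \<times> 'm) set" where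
  "mu_rel M \<sigma> \<mu> i = {(x, y). x \<in> carrier (M i) \<and> y \<in> carrier (M (i - 1)) \<and>
      (if \<sigma> i then x = \<mu> i y else y = \<mu> i x)}"

definition mu_img ::
  "(nat \<Rightarrow> ('r, 'm) module) \<Rightarrow> (nat \<Rightarrow> bool) \<Rightarrow> (nat \<Rightarrow> 'm \<Rightarrow> 'm) \<Rightarrow> nat \<Rightarrow> 'm \<Rightarrow> 'm set" where
  "mu_img M \<sigma> \<mu> i x = {y. (x, y) \<in> mu_rel M \<sigma> \<mu> i}"

definition mu_img_set ::
  "(nat \<Rightarrow> ('r, 'm) module) \<Rightarrow> (nat \<Rightarrow> bool) \<Rightarrow> (nat \<Rightarrow> 'm \<Rightarrow> 'm) \<Rightarrow> nat \<Rightarrow> 'm set \<Rightarrow> 'm set" where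
  "mu_img_set M \<sigma> \<mu> i S = (\<Union>x\<in>S. mu_img M \<sigma> \<mu> i x)"

definition mu_le ::
  "(nat \<Rightarrow> ('r, 'm) module) \<Rightarrow> (nat \<Rightarrow> bool) \<Rightarrow> (nat \<Rightarrow> 'm \<Rightarrow> 'm) \<Rightarrow> nat \<Rightarrow> 'm set \<Rightarrow> 'm set" where
  "mu_le M \<sigma> \<mu> n S = {m0. \<exists>f. f 0 = m0 \<and> f n \<in> S \<and>
      (\<forall>i\<in>{1..n}. (f i, f (i - 1)) \<in> mu_rel M \<sigma> \<mu> i)}"

end

theory Submission
  imports Defs
begin

context abelian_group begin
lemma ag_sub_sub: "a \<in> carrier G \<Longrightarrow> b \<in> carrier G \<Longrightarrow> c \<in> carrier G \<Longrightarrow> (a \<ominus> c) \<ominus> (b \<ominus> c) = a \<ominus> b"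
  proof -
  assume h: "a \<in> carrier G" "b \<in> carrier G" "c \<in> carrier G"
  have "c \<oplus> (\<ominus> b \<oplus> \<ominus> c) = \<ominus> b" using h by (metis a_comm a_inv_closed r_neg2)
  then show ?thesis using h by (simp add: a_minus_def minus_add a_ac minus_minus)
qed
lemma ag_add_sub: "a \<in> carrier G \<Longrightarrow> b \<in> carrier G \<Longrightarrow> (a \<oplus> b) \<ominus> a = b"
  by (metis a_minus_def a_comm a_inv_closed r_neg2 a_closed)
lemma ag_sub_add: "a \<in> carrier G \<Longrightarrow> b \<in> carrier G \<Longrightarrow> a \<oplus> (b \<ominus> a) = b"
  by (metis a_minus_def a_comm a_inv_closed r_neg2 a_closed)
lemma ag_sub_eq0: "a \<in> carrier G \<Longrightarrow> b \<in> carrier G \<Longrightarrow> a \<ominus> b = \<zero> \<Longrightarrow> a = b"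
  by (metis ag_sub_add r_zero)
lemma ag_sub_chain: "a \<in> carrier G \<Longrightarrow> b \<in> carrier G \<Longrightarrow> c \<in> carrier G \<Longrightarrow> (a \<ominus> b) \<oplus> (b \<ominus> c) = a \<ominus> c"
  by (simp add: a_minus_def a_assoc r_neg1)
lemma ag_neg_sub: "a \<in> carrier G \<Longrightarrow> b \<in> carrier G \<Longrightarrow> \<ominus> (a \<ominus> b) = b \<ominus> a"
  by (simp add: a_minus_def minus_add minus_minus a_comm)
lemma ag_sub_self: "a \<in> carrier G \<Longrightarrow> a \<ominus> a = \<zero>"
  by (simp add: a_minus_def r_neg)
end

lemma submod_sub_carrier: "module R M \<Longrightarrow> submodule H R M \<Longrightarrow> H \<subseteq> carrier M"
  using module.submoduleE(1) by blast

lemma submod_zero: "module R M \<Longrightarrow> submodule H R M \<Longrightarrow> \<zero>\<^bsub>M\<^esub> \<in> H"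
proof -
  assume m: "module R M" and h: "submodule H R M"
  interpret module R M by fact
  obtain a where a: "a \<in> H" using submoduleE(2)[OF h] by blast
  have "a \<oplus>\<^bsub>M\<^esub> \<ominus>\<^bsub>M\<^esub> a \<in> H" using submoduleE(3,5)[OF h] a by blast
  moreover have "a \<in> carrier M" using a submoduleE(1)[OF h] by blast
  ultimately show ?thesis by (simp add: r_neg)
qed

lemma submod_add: "module R M \<Longrightarrow> submodule H R M \<Longrightarrow> a \<in> H \<Longrightarrow> b \<in> H \<Longrightarrow> a \<oplus>\<^bsub>M\<^esub> b \<in> H"
  by (rule module.submoduleE(5))

lemma submod_sub: "module R M \<Longrightarrow> submodule H R M \<Longrightarrow> a \<in> H \<Longrightarrow> b \<in> H \<Longrightarrow> a \<ominus>\<^bsub>M\<^esub> b \<in> H"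
  unfolding a_minus_def by (rule module.submoduleE(5), assumption+, rule module.submoduleE(3))

lemma zero_submod: "module R M \<Longrightarrow> submodule {\<zero>\<^bsub>M\<^esub>} R M"
proof -
  assume m: "module R M"
  interpret module R M by fact
  show ?thesis by (rule submoduleI) (auto simp: minus_zero)
qed

lemma lin_carrier: "linear_map R M N f \<Longrightarrow> x \<in> carrier M \<Longrightarrow> f x \<in> carrier N"
  unfolding linear_map_def by blast

lemma lin_add: "linear_map R M N f \<Longrightarrow> x \<in> carrier M \<Longrightarrow> y \<in> carrier M \<Longrightarrow> f (x \<oplus>\<^bsub>M\<^esub> y) = f x \<oplus>\<^bsub>N\<^esub> f y"
  unfolding linear_map_def by (elim conjE) (drule bspec, assumption, drule bspec, assumption)
lemma lin_smult: "linear_map R M N f \<Longrightarrow> a \<in> carrier R \<Longrightarrow> x \<in> carrier M \<Longrightarrow> f (a \<odot>\<^bsub>M\<^esub> x) = a \<odot>\<^bsub>N\<^esub> f x"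
  unfolding linear_map_def by (elim conjE) (drule bspec, assumption, drule bspec, assumption)

lemma lin_zero: "module R M \<Longrightarrow> module R N \<Longrightarrow> linear_map R M N f \<Longrightarrow> f \<zero>\<^bsub>M\<^esub> = \<zero>\<^bsub>N\<^esub>"
proof -
  assume m: "module R M" and n: "module R N" and f: "linear_map R M N f"
  interpret M: module R M by fact
  interpret N: module R N by fact
  have c: "f \<zero>\<^bsub>M\<^esub> \<in> carrier N" by (rule lin_carrier[OF f M.zero_closed])
  have "f \<zero>\<^bsub>M\<^esub> = f (\<zero>\<^bsub>M\<^esub> \<oplus>\<^bsub>M\<^esub> \<zero>\<^bsub>M\<^esub>)" by simp
  also have "\<dots> = f \<zero>\<^bsub>M\<^esub> \<oplus>\<^bsub>N\<^esub> f \<zero>\<^bsub>M\<^esub>" by (rule lin_add[OF f]) simp_all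
  finally have e: "\<zero>\<^bsub>N\<^esub> \<oplus>\<^bsub>N\<^esub> f \<zero>\<^bsub>M\<^esub> = f \<zero>\<^bsub>M\<^esub> \<oplus>\<^bsub>N\<^esub> f \<zero>\<^bsub>M\<^esub>" using c by simp
  show ?thesis using N.add.right_cancel[OF c N.zero_closed c] e by simp
qed

lemma lin_sub: "module R M \<Longrightarrow> module R N \<Longrightarrow> linear_map R M N f \<Longrightarrow> a \<in> carrier M \<Longrightarrow> b \<in> carrier M \<Longrightarrow>
   f (a \<ominus>\<^bsub>M\<^esub> b) = f a \<ominus>\<^bsub>N\<^esub> f b"
proof -
  assume m: "module R M" and n: "module R N" and f: "linear_map R M N f" and ab: "a \<in> carrier M" "b \<in> carrier M"
  interpret M: module R M by fact
  interpret N: module R N by fact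
  have add: "\<And>x y. x \<in> carrier M \<Longrightarrow> y \<in> carrier M \<Longrightarrow> f (x \<oplus>\<^bsub>M\<^esub> y) = f x \<oplus>\<^bsub>N\<^esub> f y"
    using f unfolding linear_map_def by blast
  have c1: "a \<ominus>\<^bsub>M\<^esub> b \<in> carrier M" using ab by simp
  have "b \<oplus>\<^bsub>M\<^esub> (a \<ominus>\<^bsub>M\<^esub> b) = a" using ab M.ag_sub_add by blast
  then have e: "f b \<oplus>\<^bsub>N\<^esub> f (a \<ominus>\<^bsub>M\<^esub> b) = f a" using add[OF _ c1, of b] ab by simp
  have "f a \<ominus>\<^bsub>N\<^esub> f b = f (a \<ominus>\<^bsub>M\<^esub> b)"
    unfolding e[symmetric] by (rule N.ag_add_sub[OF lin_carrier[OF f ab(2)] lin_carrier[OF f c1]])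
  then show ?thesis by simp
qed

lemma image_submod: "module R M \<Longrightarrow> module R N \<Longrightarrow> linear_map R M N f \<Longrightarrow> submodule H R M \<Longrightarrow> submodule (f ` H) R N"
proof -
  assume m: "module R M" and n: "module R N" and f: "linear_map R M N f" and h: "submodule H R M"
  interpret M: module R M by fact
  interpret N: module R N by fact
  have hc: "H \<subseteq> carrier M" using h M.submoduleE(1) by blast
  show ?thesis
  proof (rule N.submoduleI)
    show "f ` H \<subseteq> carrier N" using hc lin_carrier[OF f] by (auto simp: subset_iff)
    show "\<zero>\<^bsub>N\<^esub> \<in> f ` H" using lin_zero[OF m n f] submod_zero[OF m h] by force
    fix a assume "a \<in> f ` H"
    then obtain x where x: "x \<in> H" "a = f x" by blast
    have "f (\<zero>\<^bsub>M\<^esub> \<ominus>\<^bsub>M\<^esub> x) = \<ominus>\<^bsub>N\<^esub> a"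
    proof -
      have xc: "x \<in> carrier M" using x hc by blast
      have fx: "f x \<in> carrier N" by (rule lin_carrier[OF f xc])
      have "f (\<zero>\<^bsub>M\<^esub> \<ominus>\<^bsub>M\<^esub> x) = \<zero>\<^bsub>N\<^esub> \<ominus>\<^bsub>N\<^esub> f x"
        using lin_sub[OF m n f M.zero_closed xc] lin_zero[OF m n f] by simp
      also have "\<dots> = \<ominus>\<^bsub>N\<^esub> a" using fx x(2) by (simp add: N.minus_eq)
      finally show ?thesis .
    qed
    moreover have "\<zero>\<^bsub>M\<^esub> \<ominus>\<^bsub>M\<^esub> x \<in> H" using submod_sub[OF m h] submod_zero[OF m h] x by blast
    ultimately show "\<ominus>\<^bsub>N\<^esub> a \<in> f ` H" by force
  next
    fix a b assume "a \<in> f ` H" "b \<in> f ` H"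
    then obtain x y where "x \<in> H" "a = f x" "y \<in> H" "b = f y" by blast
    moreover have "f (x \<oplus>\<^bsub>M\<^esub> y) = f x \<oplus>\<^bsub>N\<^esub> f y" using hc \<open>x \<in> H\<close> \<open>y \<in> H\<close> by (intro lin_add[OF f]) auto
    moreover have "x \<oplus>\<^bsub>M\<^esub> y \<in> H" using submod_add[OF m h] \<open>x \<in> H\<close> \<open>y \<in> H\<close> by blast
    ultimately show "a \<oplus>\<^bsub>N\<^esub> b \<in> f ` H" by (metis image_eqI)
  next
    fix a b assume "a \<in> carrier R" "b \<in> f ` H"
    then obtain y where "y \<in> H" "b = f y" by blast
    moreover have "f (a \<odot>\<^bsub>M\<^esub> y) = a \<odot>\<^bsub>N\<^esub> f y" using hc \<open>y \<in> H\<close> \<open>a \<in> carrier R\<close> by (intro lin_smult[OF f]) auto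
    moreover have "a \<odot>\<^bsub>M\<^esub> y \<in> H" using M.submoduleE(4)[OF h] \<open>y \<in> H\<close> \<open>a \<in> carrier R\<close> by blast
    ultimately show "a \<odot>\<^bsub>N\<^esub> b \<in> f ` H" by (metis image_eqI)
  qed
qed

lemma preim_submod: "module R M \<Longrightarrow> module R N \<Longrightarrow> linear_map R M N f \<Longrightarrow> submodule B R M \<Longrightarrow>
   submodule P R N \<Longrightarrow> submodule {x \<in> B. f x \<in> P} R M"
proof -
  assume m: "module R M" and n: "module R N" and f: "linear_map R M N f" and b: "submodule B R M"
    and p: "submodule P R N"
  interpret M: module R M by fact
  interpret N: module R N by fact
  have bc: "B \<subseteq> carrier M" using b M.submoduleE(1) by blast
  show ?thesis
  proof (rule M.submoduleI)
    show "{x \<in> B. f x \<in> P} \<subseteq> carrier M" using bc by blast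
    show "\<zero>\<^bsub>M\<^esub> \<in> {x \<in> B. f x \<in> P}" using lin_zero[OF m n f] submod_zero[OF m b] submod_zero[OF n p] by force
    fix a assume a: "a \<in> {x \<in> B. f x \<in> P}"
    have "f (\<zero>\<^bsub>M\<^esub> \<ominus>\<^bsub>M\<^esub> a) = \<zero>\<^bsub>N\<^esub> \<ominus>\<^bsub>N\<^esub> f a"
    proof -
      have ac: "a \<in> carrier M" using a bc by blast
      show ?thesis using lin_sub[OF m n f M.zero_closed ac] lin_zero[OF m n f] by simp
    qed
    moreover have "\<zero>\<^bsub>N\<^esub> \<ominus>\<^bsub>N\<^esub> f a \<in> P" using submod_sub[OF n p] submod_zero[OF n p] a by blast
    moreover have "\<zero>\<^bsub>M\<^esub> \<ominus>\<^bsub>M\<^esub> a \<in> B" using submod_sub[OF m b] submod_zero[OF m b] a by blast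
    moreover have "\<zero>\<^bsub>M\<^esub> \<ominus>\<^bsub>M\<^esub> a = \<ominus>\<^bsub>M\<^esub> a" using a bc by (simp add: M.minus_eq subset_iff)
    ultimately show "\<ominus>\<^bsub>M\<^esub> a \<in> {x \<in> B. f x \<in> P}" by simp
  next
    fix a b' assume "a \<in> {x \<in> B. f x \<in> P}" "b' \<in> {x \<in> B. f x \<in> P}"
    moreover have "f (a \<oplus>\<^bsub>M\<^esub> b') = f a \<oplus>\<^bsub>N\<^esub> f b'" using calculation bc by (intro lin_add[OF f]) auto
    ultimately show "a \<oplus>\<^bsub>M\<^esub> b' \<in> {x \<in> B. f x \<in> P}" using submod_add[OF m b] submod_add[OF n p] by simp
  next
    fix a b' assume "a \<in> carrier R" "b' \<in> {x \<in> B. f x \<in> P}"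
    moreover have "f (a \<odot>\<^bsub>M\<^esub> b') = a \<odot>\<^bsub>N\<^esub> f b'" using calculation bc by (intro lin_smult[OF f]) auto
    ultimately show "a \<odot>\<^bsub>M\<^esub> b' \<in> {x \<in> B. f x \<in> P}" using M.submoduleE(4)[OF b] N.submoduleE(4)[OF p] by simp
  qed
qed

lemma coset_mem: "module R M \<Longrightarrow> submodule P R M \<Longrightarrow> x \<in> carrier M \<Longrightarrow>
   z \<in> coset_of M x P \<longleftrightarrow> z \<in> carrier M \<and> z \<ominus>\<^bsub>M\<^esub> x \<in> P"
proof -
  assume m: "module R M" and p: "submodule P R M" and x: "x \<in> carrier M"
  interpret M: module R M by fact
  have pc: "P \<subseteq> carrier M" using p M.submoduleE(1) by blast
  show ?thesis
  proof
    assume "z \<in> coset_of M x P"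
    then obtain a where "a \<in> P" "z = x \<oplus>\<^bsub>M\<^esub> a" unfolding coset_of_def by blast
    then show "z \<in> carrier M \<and> z \<ominus>\<^bsub>M\<^esub> x \<in> P" using pc x M.ag_add_sub by auto
  next
    assume "z \<in> carrier M \<and> z \<ominus>\<^bsub>M\<^esub> x \<in> P"
    then have "x \<oplus>\<^bsub>M\<^esub> (z \<ominus>\<^bsub>M\<^esub> x) = z" "z \<ominus>\<^bsub>M\<^esub> x \<in> P" using x M.ag_sub_add by auto
    then show "z \<in> coset_of M x P" unfolding coset_of_def by (metis image_eqI)
  qed
qed

lemma coset_zero: "module R M \<Longrightarrow> x \<in> carrier M \<Longrightarrow> coset_of M x {\<zero>\<^bsub>M\<^esub>} = {x}"
proof -
  assume "module R M" "x \<in> carrier M"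
  then interpret module R M by simp
  show ?thesis unfolding coset_of_def using \<open>x \<in> carrier M\<close> by simp
qed


lemma LV:
  assumes m: "module R M" and n: "module R N" and f: "linear_map R M N f"
    and b: "submodule B R M" and p: "submodule P R N" and c: "c \<in> carrier N"
    and x0: "x0 \<in> B" and fx0: "f x0 \<in> coset_of N c P"
  shows "{z \<in> B. f z \<in> coset_of N c P} = coset_of M x0 {z \<in> B. f z \<in> P}"
proof -
  interpret M: module R M by fact
  interpret N: module R N by fact
  have bc: "B \<subseteq> carrier M" by (rule submod_sub_carrier[OF m b])
  have K: "submodule {z \<in> B. f z \<in> P} R M" by (rule preim_submod[OF m n f b p])
  have x0c: "x0 \<in> carrier M" using x0 bc by blast
  have fx0c: "f x0 \<in> carrier N" by (rule lin_carrier[OF f x0c])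
  have d: "f x0 \<ominus>\<^bsub>N\<^esub> c \<in> P" using fx0 coset_mem[OF n p c] by blast
  show ?thesis
  proof (rule equalityI; rule subsetI)
    fix z assume z: "z \<in> {z \<in> B. f z \<in> coset_of N c P}"
    have zc: "z \<in> carrier M" using z bc by blast
    have fzc: "f z \<in> carrier N" by (rule lin_carrier[OF f zc])
    have e: "f z \<ominus>\<^bsub>N\<^esub> c \<in> P" using z coset_mem[OF n p c] by blast
    have w: "z \<ominus>\<^bsub>M\<^esub> x0 \<in> B" using submod_sub[OF m b] z x0 by blast
    have "f (z \<ominus>\<^bsub>M\<^esub> x0) = f z \<ominus>\<^bsub>N\<^esub> f x0" by (rule lin_sub[OF m n f zc x0c])
    also have "\<dots> = (f z \<ominus>\<^bsub>N\<^esub> c) \<ominus>\<^bsub>N\<^esub> (f x0 \<ominus>\<^bsub>N\<^esub> c)" by (rule N.ag_sub_sub[symmetric, OF fzc fx0c c])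
    finally have "f (z \<ominus>\<^bsub>M\<^esub> x0) \<in> P" using submod_sub[OF n p e d] by simp
    then show "z \<in> coset_of M x0 {z \<in> B. f z \<in> P}" using coset_mem[OF m K x0c] zc w by blast
  next
    fix z assume z: "z \<in> coset_of M x0 {z \<in> B. f z \<in> P}"
    then have zc: "z \<in> carrier M" and w: "z \<ominus>\<^bsub>M\<^esub> x0 \<in> B" and fw: "f (z \<ominus>\<^bsub>M\<^esub> x0) \<in> P"
      using coset_mem[OF m K x0c] by blast+
    have fzc: "f z \<in> carrier N" by (rule lin_carrier[OF f zc])
    have "z = x0 \<oplus>\<^bsub>M\<^esub> (z \<ominus>\<^bsub>M\<^esub> x0)" using M.ag_sub_add[OF x0c zc] by simp
    then have zB: "z \<in> B" using submod_add[OF m b x0 w] by simp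
    have "f z \<ominus>\<^bsub>N\<^esub> c = (f z \<ominus>\<^bsub>N\<^esub> f x0) \<oplus>\<^bsub>N\<^esub> (f x0 \<ominus>\<^bsub>N\<^esub> c)" by (rule N.ag_sub_chain[symmetric, OF fzc fx0c c])
    also have "\<dots> = f (z \<ominus>\<^bsub>M\<^esub> x0) \<oplus>\<^bsub>N\<^esub> (f x0 \<ominus>\<^bsub>N\<^esub> c)" using lin_sub[OF m n f zc x0c] by simp
    finally have "f z \<ominus>\<^bsub>N\<^esub> c \<in> P" using submod_add[OF n p fw d] by simp
    then have "f z \<in> coset_of N c P" using coset_mem[OF n p c] fzc by blast
    then show "z \<in> {z \<in> B. f z \<in> coset_of N c P}" using zB by blast
  qed
qed

lemma coset_sub_carrier: "module R M \<Longrightarrow> submodule P R M \<Longrightarrow> x \<in> carrier M \<Longrightarrow> coset_of M x P \<subseteq> carrier M"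
proof -
  assume a: "module R M" "submodule P R M" "x \<in> carrier M"
  show ?thesis using coset_mem[OF a] by blast
qed

lemma coset_sym:
  assumes m: "module R M" and p: "submodule P R M" and x: "x \<in> carrier M" and z: "z \<in> carrier M"
    and h: "x \<in> coset_of M z P"
  shows "z \<in> coset_of M x P"
proof -
  interpret M: module R M by fact
  have "x \<ominus>\<^bsub>M\<^esub> z \<in> P" using h coset_mem[OF m p z] by blast
  then have "\<ominus>\<^bsub>M\<^esub> (x \<ominus>\<^bsub>M\<^esub> z) \<in> P" by (rule M.submoduleE(3)[OF p])
  then have "z \<ominus>\<^bsub>M\<^esub> x \<in> P" using M.ag_neg_sub[OF x z] by simp
  then show ?thesis using coset_mem[OF m p x] z by blast
qed

lemma coset_trans:
  assumes m: "module R M" and p: "submodule P R M" and x: "x \<in> carrier M" and z: "z \<in> carrier M"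
    and h1: "z \<in> coset_of M w P" and h2: "w \<in> coset_of M x P" and w: "w \<in> carrier M"
  shows "z \<in> coset_of M x P"
proof -
  interpret M: module R M by fact
  have a: "z \<ominus>\<^bsub>M\<^esub> w \<in> P" using h1 coset_mem[OF m p w] by blast
  have b: "w \<ominus>\<^bsub>M\<^esub> x \<in> P" using h2 coset_mem[OF m p x] by blast
  have "z \<ominus>\<^bsub>M\<^esub> x = (z \<ominus>\<^bsub>M\<^esub> w) \<oplus>\<^bsub>M\<^esub> (w \<ominus>\<^bsub>M\<^esub> x)" by (rule M.ag_sub_chain[symmetric, OF z w x])
  then have "z \<ominus>\<^bsub>M\<^esub> x \<in> P" using submod_add[OF m p a b] by simp
  then show ?thesis using coset_mem[OF m p x] z by blast
qed

lemma fmod_module: "filtered_module R Rf M Mf \<Longrightarrow> module R M"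
  unfolding filtered_module_def by blast
lemma fmod_sub: "filtered_module R Rf M Mf \<Longrightarrow> submodule (Mf n) R M"
  unfolding filtered_module_def by blast
lemma fmod_desc: "filtered_module R Rf M Mf \<Longrightarrow> Mf (Suc n) \<subseteq> Mf n"
  unfolding filtered_module_def by blast

lemma closed_carrier: "fm_closed M Mf (carrier M)"
  unfolding fm_closed_def fm_open_def by simp

lemma closed_Int: "fm_closed M Mf S \<Longrightarrow> fm_closed M Mf T \<Longrightarrow> fm_closed M Mf (S \<inter> T)"
  unfolding fm_closed_def fm_open_def
proof (intro conjI ballI)
  assume s: "S \<subseteq> carrier M \<and> carrier M - S \<subseteq> carrier M \<and> (\<forall>x\<in>carrier M - S. \<exists>n. coset_of M x (Mf n) \<subseteq> carrier M - S)"
    and t: "T \<subseteq> carrier M \<and> carrier M - T \<subseteq> carrier M \<and> (\<forall>x\<in>carrier M - T. \<exists>n. coset_of M x (Mf n) \<subseteq> carrier M - T)"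
  show "S \<inter> T \<subseteq> carrier M" using s by blast
  show "carrier M - S \<inter> T \<subseteq> carrier M" by blast
  fix x assume x: "x \<in> carrier M - S \<inter> T"
  show "\<exists>n. coset_of M x (Mf n) \<subseteq> carrier M - S \<inter> T"
  proof (cases "x \<in> S")
    case True
    then have "x \<in> carrier M - T" using x by blast
    then obtain n where "coset_of M x (Mf n) \<subseteq> carrier M - T" using t by blast
    then show ?thesis by blast
  next
    case False
    then have "x \<in> carrier M - S" using x by blast
    then obtain n where "coset_of M x (Mf n) \<subseteq> carrier M - S" using s by blast
    then show ?thesis by blast
  qed
qed

lemma closed_preimage:
  assumes f: "\<And>x. x \<in> carrier M \<Longrightarrow> f x \<in> carrier N" and c: "fm_continuous M Mf N Nf f"
    and S: "fm_closed N Nf S"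
  shows "fm_closed M Mf {x \<in> carrier M. f x \<in> S}"
proof -
  have "fm_open N Nf (carrier N - S)" using S unfolding fm_closed_def by blast
  then have o: "fm_open M Mf {x \<in> carrier M. f x \<in> carrier N - S}" using c unfolding fm_continuous_def by blast
  have "carrier M - {x \<in> carrier M. f x \<in> S} = {x \<in> carrier M. f x \<in> carrier N - S}" using f by blast
  then show ?thesis using o unfolding fm_closed_def by simp
qed

lemma closed_coset:
  assumes fm: "filtered_module R Rf M Mf" and x: "x \<in> carrier M"
  shows "fm_closed M Mf (coset_of M x (Mf n))"
proof -
  have m: "module R M" by (rule fmod_module[OF fm])
  have p: "submodule (Mf n) R M" by (rule fmod_sub[OF fm])
  show ?thesis unfolding fm_closed_def fm_open_def
  proof (intro conjI ballI exI)
    show "coset_of M x (Mf n) \<subseteq> carrier M" by (rule coset_sub_carrier[OF m p x])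
    show "carrier M - coset_of M x (Mf n) \<subseteq> carrier M" by blast
    fix z assume z: "z \<in> carrier M - coset_of M x (Mf n)"
    have zc: "z \<in> carrier M" using z by blast
    show "coset_of M z (Mf n) \<subseteq> carrier M - coset_of M x (Mf n)"
    proof
      fix w assume w: "w \<in> coset_of M z (Mf n)"
      have wc: "w \<in> carrier M" using w coset_sub_carrier[OF m p zc] by blast
      have "w \<notin> coset_of M x (Mf n)"
      proof
        assume wx: "w \<in> coset_of M x (Mf n)"
        have "z \<in> coset_of M w (Mf n)" by (rule coset_sym[OF m p wc zc w])
        then have "z \<in> coset_of M x (Mf n)" by (rule coset_trans[OF m p x zc _ wx wc])
        then show False using z by blast
      qed
      then show "w \<in> carrier M - coset_of M x (Mf n)" using wc by blast
    qed
  qed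
qed

lemma Inter_coset:
  assumes fm: "filtered_module R Rf M Mf" and H: "(\<Inter>n. Mf n) = {\<zero>\<^bsub>M\<^esub>}" and x: "x \<in> carrier M"
  shows "(\<Inter>n. coset_of M x (Mf n)) = {x}"
proof -
  have m: "module R M" by (rule fmod_module[OF fm])
  interpret M: module R M by fact
  have p: "\<And>k. submodule (Mf k) R M" by (rule fmod_sub[OF fm])
  show ?thesis
  proof (rule equalityI; rule subsetI)
    fix z assume z: "z \<in> (\<Inter>n. coset_of M x (Mf n))"
    then have zc: "z \<in> carrier M" using coset_sub_carrier[OF m p x] by blast
    have "\<And>n. z \<ominus>\<^bsub>M\<^esub> x \<in> Mf n" using z coset_mem[OF m p x] by blast
    then have "z \<ominus>\<^bsub>M\<^esub> x \<in> (\<Inter>n. Mf n)" by blast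
    then have "z \<ominus>\<^bsub>M\<^esub> x = \<zero>\<^bsub>M\<^esub>" using H by blast
    then show "z \<in> {x}" using M.ag_sub_eq0[OF zc x] by simp
  next
    fix z assume "z \<in> {x}"
    then have "z = x" by simp
    moreover have "\<And>n. x \<in> coset_of M x (Mf n)"
      using coset_mem[OF m p x] x M.ag_sub_self[OF x] submod_zero[OF m p] by simp
    ultimately show "z \<in> (\<Inter>n. coset_of M x (Mf n))" by blast
  qed
qed

lemma closed_Inter:
  assumes a: "\<And>n. fm_closed M Mf (S n)"
  shows "fm_closed M Mf (\<Inter>n. S n)"
  unfolding fm_closed_def fm_open_def
proof (intro conjI ballI)
  show "(\<Inter>n. S n) \<subseteq> carrier M" using a[of undefined] unfolding fm_closed_def by blast
  show "carrier M - (\<Inter>n. S n) \<subseteq> carrier M" by blast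
  fix x assume x: "x \<in> carrier M - (\<Inter>n. S n)"
  then obtain k where "x \<in> carrier M - S k" by blast
  then obtain n where "coset_of M x (Mf n) \<subseteq> carrier M - S k" using a[of k] unfolding fm_closed_def fm_open_def by blast
  then show "\<exists>n. coset_of M x (Mf n) \<subseteq> carrier M - (\<Inter>n. S n)" by blast
qed

lemma closed_singleton:
  assumes fm: "filtered_module R Rf M Mf" and H: "(\<Inter>n. Mf n) = {\<zero>\<^bsub>M\<^esub>}" and x: "x \<in> carrier M"
  shows "fm_closed M Mf {x}"
proof -
  have "fm_closed M Mf (\<Inter>n. coset_of M x (Mf n))" by (rule closed_Inter, rule closed_coset[OF fm x])
  then show ?thesis using Inter_coset[OF fm H x] by simp
qed


lemma fip_desc:
  assumes d: "\<And>n. S (Suc n) \<subseteq> S n" and ne: "\<And>n. S n \<noteq> {}"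
    and G: "G \<subseteq> range S" "finite G" "G \<noteq> {}"
  shows "\<Inter>G \<noteq> {}"
proof -
  obtain I where I: "I \<subseteq> UNIV" "finite I" "G = S ` I" using finite_subset_image[OF G(2) G(1)] by blast
  have Ine: "I \<noteq> {}" using I G(3) by blast
  define k where "k = Max I"
  have "\<And>i. i \<in> I \<Longrightarrow> S k \<subseteq> S i"
  proof -
    fix i assume "i \<in> I"
    then have "i \<le> k" unfolding k_def using I(2) by simp
    then show "S k \<subseteq> S i" by (rule lift_Suc_antimono_le[of S, OF d])
  qed
  then have "S k \<subseteq> \<Inter>G" using I(3) by blast
  then show ?thesis using ne[of k] by blast
qed

lemma coset_mono: "P \<subseteq> Q \<Longrightarrow> coset_of M c P \<subseteq> coset_of M c Q"
  unfolding coset_of_def by (rule image_mono)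

lemma compact_step:
  assumes fm: "filtered_module R Rf M Mf" and n: "module R N" and f: "linear_map R M N f"
    and cont: "fm_continuous M Mf N Nf f" and lc: "linearly_compact R M Mf"
    and B1: "\<And>k. submodule (B k) R M" and B2: "\<And>k. fm_closed M Mf (B k)" and B3: "\<And>k. B (Suc k) \<subseteq> B k"
    and P1: "\<And>k. submodule (P k) R N" and P2: "\<And>k. fm_closed N Nf (coset_of N c (P k))"
    and P3: "\<And>k. P (Suc k) \<subseteq> P k"
    and c: "c \<in> carrier N"
    and ex: "\<And>k. \<exists>y\<in>B k. f y \<in> coset_of N c (P k)"
  shows "\<exists>y. \<forall>k. y \<in> B k \<and> f y \<in> coset_of N c (P k)"
proof -
  define S where "S k = {y \<in> B k. f y \<in> coset_of N c (P k)}" for k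
  have m: "module R M" by (rule fmod_module[OF fm])
  have cl: "fm_closed M Mf (S k)" for k
  proof -
    have bc: "B k \<subseteq> carrier M" by (rule submod_sub_carrier[OF m B1])
    have "S k = B k \<inter> {x \<in> carrier M. f x \<in> coset_of N c (P k)}" unfolding S_def using bc by blast
    moreover have "fm_closed M Mf {x \<in> carrier M. f x \<in> coset_of N c (P k)}"
      by (rule closed_preimage[OF lin_carrier[OF f] cont P2])
    ultimately show ?thesis using closed_Int[OF B2] by simp
  qed
  have lv: "linear_variety R M (S k)" for k
  proof -
    obtain y0 where y0: "y0 \<in> B k" "f y0 \<in> coset_of N c (P k)" using ex[of k] by blast
    have "S k = coset_of M y0 {z \<in> B k. f z \<in> P k}" unfolding S_def by (rule LV[OF m n f B1 P1 c y0])
    moreover have "submodule {z \<in> B k. f z \<in> P k} R M" by (rule preim_submod[OF m n f B1 P1])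
    moreover have "y0 \<in> carrier M" using y0(1) submod_sub_carrier[OF m B1] by blast
    ultimately show ?thesis unfolding linear_variety_def by blast
  qed
  have desc: "S (Suc k) \<subseteq> S k" for k
    unfolding S_def using B3[of k] coset_mono[OF P3[of k], of N c] by blast
  have ne: "S k \<noteq> {}" for k unfolding S_def using ex[of k] by blast
  have "\<Inter>(range S) \<noteq> {}"
    using lc unfolding linearly_compact_def
  proof (elim allE impE)
    show "(\<forall>T\<in>range S. fm_closed M Mf T \<and> linear_variety R M T) \<and>
      (\<forall>G. G \<subseteq> range S \<and> finite G \<and> G \<noteq> {} \<longrightarrow> \<Inter> G \<noteq> {})"
      using cl lv fip_desc[of S, OF desc ne] by blast
  qed
  then obtain y where "y \<in> \<Inter>(range S)" by blast
  then show ?thesis unfolding S_def by blast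
qed

lemma image_closed:
  assumes fm: "filtered_module R Rf M Mf" and fn: "filtered_module R Rf N Nf" and f: "linear_map R M N f"
    and cont: "fm_continuous M Mf N Nf f" and lc: "linearly_compact R M Mf"
    and H: "(\<Inter>n. Nf n) = {\<zero>\<^bsub>N\<^esub>}"
    and S1: "submodule S R M" and S2: "fm_closed M Mf S"
  shows "fm_closed N Nf (f ` S)"
proof -
  have m: "module R M" by (rule fmod_module[OF fm])
  have n: "module R N" by (rule fmod_module[OF fn])
  have sc: "S \<subseteq> carrier M" by (rule submod_sub_carrier[OF m S1])
  have fsc: "f ` S \<subseteq> carrier N" using sc lin_carrier[OF f] by blast
  show ?thesis unfolding fm_closed_def fm_open_def
  proof (intro conjI ballI)
    show "f ` S \<subseteq> carrier N" by (rule fsc)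
    show "carrier N - f ` S \<subseteq> carrier N" by blast
    fix y assume y: "y \<in> carrier N - f ` S"
    have yc: "y \<in> carrier N" using y by blast
    show "\<exists>n. coset_of N y (Nf n) \<subseteq> carrier N - f ` S"
    proof (rule ccontr)
      assume a: "\<not> (\<exists>n. coset_of N y (Nf n) \<subseteq> carrier N - f ` S)"
      have ex: "\<exists>x\<in>S. f x \<in> coset_of N y (Nf k)" for k
      proof -
        have "\<not> coset_of N y (Nf k) \<subseteq> carrier N - f ` S" using a by blast
        moreover have "coset_of N y (Nf k) \<subseteq> carrier N" by (rule coset_sub_carrier[OF n fmod_sub[OF fn] yc])
        ultimately show ?thesis by blast
      qed
      obtain x where x: "\<forall>k. x \<in> S \<and> f x \<in> coset_of N y (Nf k)"
        using compact_step[where B="\<lambda>_. S" and P=Nf and c=y, OF fm n f cont lc S1 S2 subset_refl fmod_sub[OF fn] closed_coset[OF fn yc] fmod_desc[OF fn] yc ex]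
        by blast
      then have "f x \<in> (\<Inter>k. coset_of N y (Nf k))" by blast
      then have "f x = y" using Inter_coset[OF fn H yc] by blast
      then show False using x y by blast
    qed
  qed
qed


lemma cch_fm: "cch_ray_rep R Rf M Mf \<sigma> \<mu> \<Longrightarrow> filtered_module R Rf (M i) (Mf i)"
  unfolding cch_ray_rep_def by blast
lemma cch_lc: "cch_ray_rep R Rf M Mf \<sigma> \<mu> \<Longrightarrow> linearly_compact R (M i) (Mf i)"
  unfolding cch_ray_rep_def by blast
lemma cch_H: "cch_ray_rep R Rf M Mf \<sigma> \<mu> \<Longrightarrow> (\<Inter>n. Mf i n) = {\<zero>\<^bsub>M i\<^esub>}"
  unfolding cch_ray_rep_def by blast
lemma cch_pos: "cch_ray_rep R Rf M Mf \<sigma> \<mu> \<Longrightarrow> \<sigma> (Suc i) \<Longrightarrow>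
   linear_map R (M i) (M (Suc i)) (\<mu> (Suc i)) \<and> fm_continuous (M i) (Mf i) (M (Suc i)) (Mf (Suc i)) (\<mu> (Suc i))"
proof -
  assume c: "cch_ray_rep R Rf M Mf \<sigma> \<mu>" and s: "\<sigma> (Suc i)"
  have "Suc i \<ge> 1" by simp
  then have "linear_map R (M (Suc i - 1)) (M (Suc i)) (\<mu> (Suc i)) \<and>
     fm_continuous (M (Suc i - 1)) (Mf (Suc i - 1)) (M (Suc i)) (Mf (Suc i)) (\<mu> (Suc i))"
    using c s unfolding cch_ray_rep_def ray_rep_def by (metis (no_types, lifting))
  then show ?thesis by simp
qed
lemma cch_neg: "cch_ray_rep R Rf M Mf \<sigma> \<mu> \<Longrightarrow> \<not> \<sigma> (Suc i) \<Longrightarrow>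
   linear_map R (M (Suc i)) (M i) (\<mu> (Suc i)) \<and> fm_continuous (M (Suc i)) (Mf (Suc i)) (M i) (Mf i) (\<mu> (Suc i))"
proof -
  assume c: "cch_ray_rep R Rf M Mf \<sigma> \<mu>" and s: "\<not> \<sigma> (Suc i)"
  have "Suc i \<ge> 1" by simp
  then have "linear_map R (M (Suc i)) (M (Suc i - 1)) (\<mu> (Suc i)) \<and>
     fm_continuous (M (Suc i)) (Mf (Suc i)) (M (Suc i - 1)) (Mf (Suc i - 1)) (\<mu> (Suc i))"
    using c s unfolding cch_ray_rep_def ray_rep_def by (metis (no_types, lifting))
  then show ?thesis by simp
qed

lemma mu_rel_Suc: "(x, y) \<in> mu_rel M \<sigma> \<mu> (Suc i) \<longleftrightarrow>
   x \<in> carrier (M (Suc i)) \<and> y \<in> carrier (M i) \<and> (if \<sigma> (Suc i) then x = \<mu> (Suc i) y else y = \<mu> (Suc i) x)"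
  unfolding mu_rel_def by simp

lemma part1:
  assumes c: "cch_ray_rep R Rf M Mf \<sigma> \<mu>" and m: "m \<in> carrier (M (Suc i))"
  shows "fm_closed (M i) (Mf i) (mu_img M \<sigma> \<mu> (Suc i) m) \<and>
    (mu_img M \<sigma> \<mu> (Suc i) m \<noteq> {} \<longrightarrow> linear_variety R (M i) (mu_img M \<sigma> \<mu> (Suc i) m))"
proof -
  have fmi: "filtered_module R Rf (M i) (Mf i)" by (rule cch_fm[OF c])
  have fms: "filtered_module R Rf (M (Suc i)) (Mf (Suc i))" by (rule cch_fm[OF c])
  have mi: "module R (M i)" by (rule fmod_module[OF fmi])
  have ms: "module R (M (Suc i))" by (rule fmod_module[OF fms])
  show ?thesis
  proof (cases "\<sigma> (Suc i)")
    case True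
    have l: "linear_map R (M i) (M (Suc i)) (\<mu> (Suc i))" and ct: "fm_continuous (M i) (Mf i) (M (Suc i)) (Mf (Suc i)) (\<mu> (Suc i))"
      using cch_pos[OF c True] by blast+
    have e: "mu_img M \<sigma> \<mu> (Suc i) m = {y \<in> carrier (M i). \<mu> (Suc i) y \<in> {m}}"
      unfolding mu_img_def mu_rel_Suc using True m by auto
    have cl: "fm_closed (M i) (Mf i) (mu_img M \<sigma> \<mu> (Suc i) m)"
      unfolding e by (rule closed_preimage[OF lin_carrier[OF l] ct closed_singleton[OF fms cch_H[OF c] m]])
    have "linear_variety R (M i) (mu_img M \<sigma> \<mu> (Suc i) m)" if ne: "mu_img M \<sigma> \<mu> (Suc i) m \<noteq> {}"
    proof -
      obtain y0 where y0: "y0 \<in> mu_img M \<sigma> \<mu> (Suc i) m" using ne by blast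
      have y0c: "y0 \<in> carrier (M i)" using y0 e by blast
      have cz: "coset_of (M (Suc i)) m {\<zero>\<^bsub>M (Suc i)\<^esub>} = {m}" by (rule coset_zero[OF ms m])
      have "{y \<in> carrier (M i). \<mu> (Suc i) y \<in> coset_of (M (Suc i)) m {\<zero>\<^bsub>M (Suc i)\<^esub>}}
        = coset_of (M i) y0 {z \<in> carrier (M i). \<mu> (Suc i) z \<in> {\<zero>\<^bsub>M (Suc i)\<^esub>}}"
        by (rule LV[OF mi ms l module.carrier_is_submodule[OF mi] zero_submod[OF ms] m y0c]) (use y0 e cz in auto)
      then have "mu_img M \<sigma> \<mu> (Suc i) m = coset_of (M i) y0 {z \<in> carrier (M i). \<mu> (Suc i) z \<in> {\<zero>\<^bsub>M (Suc i)\<^esub>}}"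
        using e cz by simp
      moreover have "submodule {z \<in> carrier (M i). \<mu> (Suc i) z \<in> {\<zero>\<^bsub>M (Suc i)\<^esub>}} R (M i)"
        by (rule preim_submod[OF mi ms l module.carrier_is_submodule[OF mi] zero_submod[OF ms]])
      ultimately show ?thesis unfolding linear_variety_def using y0c by blast
    qed
    then show ?thesis using cl by blast
  next
    case False
    have l: "linear_map R (M (Suc i)) (M i) (\<mu> (Suc i))"
      using cch_neg[OF c False] by blast
    have mc: "\<mu> (Suc i) m \<in> carrier (M i)" by (rule lin_carrier[OF l m])
    have e: "mu_img M \<sigma> \<mu> (Suc i) m = {\<mu> (Suc i) m}"
      unfolding mu_img_def mu_rel_Suc using False m mc by auto
    have "linear_variety R (M i) {\<mu> (Suc i) m}"
      unfolding linear_variety_def using coset_zero[OF mi mc] zero_submod[OF mi] mc by metis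
    then show ?thesis using e closed_singleton[OF fmi cch_H[OF c] mc] by simp
  qed
qed

lemma part2:
  assumes c: "cch_ray_rep R Rf M Mf \<sigma> \<mu>" and N1: "submodule N R (M (Suc i))"
    and N2: "fm_closed (M (Suc i)) (Mf (Suc i)) N"
  shows "submodule (mu_img_set M \<sigma> \<mu> (Suc i) N) R (M i) \<and> fm_closed (M i) (Mf i) (mu_img_set M \<sigma> \<mu> (Suc i) N)"
proof -
  have fmi: "filtered_module R Rf (M i) (Mf i)" by (rule cch_fm[OF c])
  have fms: "filtered_module R Rf (M (Suc i)) (Mf (Suc i))" by (rule cch_fm[OF c])
  have mi: "module R (M i)" by (rule fmod_module[OF fmi])
  have ms: "module R (M (Suc i))" by (rule fmod_module[OF fms])
  have nc: "N \<subseteq> carrier (M (Suc i))" by (rule submod_sub_carrier[OF ms N1])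
  show ?thesis
  proof (cases "\<sigma> (Suc i)")
    case True
    have l: "linear_map R (M i) (M (Suc i)) (\<mu> (Suc i))" and ct: "fm_continuous (M i) (Mf i) (M (Suc i)) (Mf (Suc i)) (\<mu> (Suc i))"
      using cch_pos[OF c True] by blast+
    have e: "mu_img_set M \<sigma> \<mu> (Suc i) N = {y \<in> carrier (M i). \<mu> (Suc i) y \<in> N}"
      unfolding mu_img_set_def mu_img_def mu_rel_Suc using True nc by auto
    show ?thesis unfolding e
      using preim_submod[OF mi ms l module.carrier_is_submodule[OF mi] N1]
        closed_preimage[OF lin_carrier[OF l] ct N2] by blast
  next
    case False
    have l: "linear_map R (M (Suc i)) (M i) (\<mu> (Suc i))" and ct: "fm_continuous (M (Suc i)) (Mf (Suc i)) (M i) (Mf i) (\<mu> (Suc i))"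
      using cch_neg[OF c False] by blast+
    have e: "mu_img_set M \<sigma> \<mu> (Suc i) N = \<mu> (Suc i) ` N"
      unfolding mu_img_set_def mu_img_def mu_rel_Suc using False nc lin_carrier[OF l] by auto
    show ?thesis unfolding e
      using image_submod[OF ms mi l N1]
        image_closed[OF fms fmi l ct cch_lc[OF c] cch_H[OF c] N1 N2] by blast
  qed
qed


fun Bset :: "(nat \<Rightarrow> ('r, 'm) module) \<Rightarrow> (nat \<Rightarrow> bool) \<Rightarrow> (nat \<Rightarrow> 'm \<Rightarrow> 'm) \<Rightarrow> nat \<Rightarrow> nat \<Rightarrow> 'm set" where
  "Bset M \<sigma> \<mu> j 0 = carrier (M j)"
| "Bset M \<sigma> \<mu> j (Suc k) = mu_img_set M \<sigma> \<mu> (Suc j) (Bset M \<sigma> \<mu> (Suc j) k)"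

lemma Bset_props:
  assumes c: "cch_ray_rep R Rf M Mf \<sigma> \<mu>"
  shows "submodule (Bset M \<sigma> \<mu> j k) R (M j) \<and> fm_closed (M j) (Mf j) (Bset M \<sigma> \<mu> j k)"
proof (induction k arbitrary: j)
  case 0
  have "module R (M j)" by (rule fmod_module[OF cch_fm[OF c]])
  then show ?case using module.carrier_is_submodule[of R "M j"] closed_carrier[of "M j" "Mf j"] by simp
next
  case (Suc k)
  then show ?case using part2[OF c] by simp
qed

lemma mu_img_set_sub: "mu_img_set M \<sigma> \<mu> (Suc j) S \<subseteq> carrier (M j)"
  unfolding mu_img_set_def mu_img_def mu_rel_Suc by blast

lemma mu_img_set_mono: "S \<subseteq> T \<Longrightarrow> mu_img_set M \<sigma> \<mu> i S \<subseteq> mu_img_set M \<sigma> \<mu> i T"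
  unfolding mu_img_set_def by blast

lemma Bset_desc: "Bset M \<sigma> \<mu> j (Suc k) \<subseteq> Bset M \<sigma> \<mu> j k"
proof (induction k arbitrary: j)
  case 0
  then show ?case using mu_img_set_sub by simp
next
  case (Suc k)
  then show ?case using mu_img_set_mono[OF Suc.IH[of "Suc j"], of M \<sigma> \<mu> "Suc j"] by simp
qed

lemma chain_B:
  assumes r: "\<forall>i\<in>{1..n}. (f i, f (i - 1)) \<in> mu_rel M \<sigma> \<mu> i" and fn: "f n \<in> carrier (M n)"
  shows "j + d = n \<Longrightarrow> f j \<in> Bset M \<sigma> \<mu> j d"
proof (induction d arbitrary: j)
  case 0
  then show ?case using fn by simp
next
  case (Suc d)
  have ih: "f (Suc j) \<in> Bset M \<sigma> \<mu> (Suc j) d" using Suc.IH[of "Suc j"] Suc.prems by simp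
  have "Suc j \<in> {1..n}" using Suc.prems by simp
  then have "(f (Suc j), f j) \<in> mu_rel M \<sigma> \<mu> (Suc j)" using r by fastforce
  then show ?case using ih unfolding Bset.simps mu_img_set_def mu_img_def by blast
qed

lemma step_K:
  assumes c: "cch_ray_rep R Rf M Mf \<sigma> \<mu>" and x: "\<forall>k. x \<in> Bset M \<sigma> \<mu> j k"
  shows "\<exists>y. (\<forall>k. y \<in> Bset M \<sigma> \<mu> (Suc j) k) \<and> (y, x) \<in> mu_rel M \<sigma> \<mu> (Suc j)"
proof -
  have xc: "x \<in> carrier (M j)" using x[rule_format, of 0] by simp
  have ex: "\<exists>y\<in>Bset M \<sigma> \<mu> (Suc j) k. (y, x) \<in> mu_rel M \<sigma> \<mu> (Suc j)" for k
    using x[rule_format, of "Suc k"] unfolding Bset.simps mu_img_set_def mu_img_def by blast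
  show ?thesis
  proof (cases "\<sigma> (Suc j)")
    case True
    have l: "linear_map R (M j) (M (Suc j)) (\<mu> (Suc j))" using cch_pos[OF c True] by blast
    have "\<forall>k. \<mu> (Suc j) x \<in> Bset M \<sigma> \<mu> (Suc j) k"
    proof
      fix k
      obtain y where "y \<in> Bset M \<sigma> \<mu> (Suc j) k" "(y, x) \<in> mu_rel M \<sigma> \<mu> (Suc j)" using ex[of k] by blast
      then show "\<mu> (Suc j) x \<in> Bset M \<sigma> \<mu> (Suc j) k" unfolding mu_rel_Suc using True by simp
    qed
    moreover have "(\<mu> (Suc j) x, x) \<in> mu_rel M \<sigma> \<mu> (Suc j)"
      unfolding mu_rel_Suc using True xc lin_carrier[OF l xc] by simp
    ultimately show ?thesis by blast
  next
    case False
    have l: "linear_map R (M (Suc j)) (M j) (\<mu> (Suc j))" and ct: "fm_continuous (M (Suc j)) (Mf (Suc j)) (M j) (Mf j) (\<mu> (Suc j))"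
      using cch_neg[OF c False] by blast+
    have fmj: "filtered_module R Rf (M j) (Mf j)" by (rule cch_fm[OF c])
    have fms: "filtered_module R Rf (M (Suc j)) (Mf (Suc j))" by (rule cch_fm[OF c])
    have mj: "module R (M j)" by (rule fmod_module[OF fmj])
    have cz: "coset_of (M j) x {\<zero>\<^bsub>M j\<^esub>} = {x}" by (rule coset_zero[OF mj xc])
    have ex2: "\<exists>y\<in>Bset M \<sigma> \<mu> (Suc j) k. \<mu> (Suc j) y \<in> coset_of (M j) x {\<zero>\<^bsub>M j\<^esub>}" for k
      using ex[of k] False unfolding cz mu_rel_Suc by auto
    have B1: "\<And>k. submodule (Bset M \<sigma> \<mu> (Suc j) k) R (M (Suc j))" using Bset_props[OF c] by blast
    have B2: "\<And>k. fm_closed (M (Suc j)) (Mf (Suc j)) (Bset M \<sigma> \<mu> (Suc j) k)" using Bset_props[OF c] by blast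
    have P2: "\<And>k. fm_closed (M j) (Mf j) (coset_of (M j) x ((\<lambda>_. {\<zero>\<^bsub>M j\<^esub>}) k))"
      using closed_singleton[OF fmj cch_H[OF c] xc] cz by simp
    obtain y where y: "\<forall>k. y \<in> Bset M \<sigma> \<mu> (Suc j) k \<and> \<mu> (Suc j) y \<in> coset_of (M j) x {\<zero>\<^bsub>M j\<^esub>}"
      using compact_step[where B="Bset M \<sigma> \<mu> (Suc j)" and P="\<lambda>_. {\<zero>\<^bsub>M j\<^esub>}" and c=x,
          OF fms mj l ct cch_lc[OF c] B1 B2 Bset_desc zero_submod[OF mj] P2 subset_refl xc ex2]
      by blast
    have yc: "y \<in> carrier (M (Suc j))" using y[rule_format, of 0] by simp
    have "(y, x) \<in> mu_rel M \<sigma> \<mu> (Suc j)" unfolding mu_rel_Suc using False yc xc y cz by auto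
    then show ?thesis using y by blast
  qed
qed

fun chainf :: "(nat \<Rightarrow> ('r, 'm) module) \<Rightarrow> (nat \<Rightarrow> bool) \<Rightarrow> (nat \<Rightarrow> 'm \<Rightarrow> 'm) \<Rightarrow> 'm \<Rightarrow> nat \<Rightarrow> 'm" where
  "chainf M \<sigma> \<mu> m 0 = m"
| "chainf M \<sigma> \<mu> m (Suc j) = (SOME y. (\<forall>k. y \<in> Bset M \<sigma> \<mu> (Suc j) k) \<and> (y, chainf M \<sigma> \<mu> m j) \<in> mu_rel M \<sigma> \<mu> (Suc j))"

lemma chainf_props:
  assumes c: "cch_ray_rep R Rf M Mf \<sigma> \<mu>" and m: "\<forall>k. m \<in> Bset M \<sigma> \<mu> 0 k"
  shows "(\<forall>k. chainf M \<sigma> \<mu> m j \<in> Bset M \<sigma> \<mu> j k) \<and>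
    (j > 0 \<longrightarrow> (chainf M \<sigma> \<mu> m j, chainf M \<sigma> \<mu> m (j - 1)) \<in> mu_rel M \<sigma> \<mu> j)"
proof (induction j)
  case 0
  then show ?case using m by simp
next
  case (Suc j)
  then have "\<forall>k. chainf M \<sigma> \<mu> m j \<in> Bset M \<sigma> \<mu> j k" by blast
  from someI_ex[OF step_K[OF c this]] show ?case by simp
qed

lemma part3:
  assumes c: "cch_ray_rep R Rf M Mf \<sigma> \<mu>"
  shows "(\<Inter>i. mu_le M \<sigma> \<mu> i (carrier (M i))) =
           {m \<in> carrier (M 0). \<exists>f. (\<forall>i. f i \<in> carrier (M i)) \<and> f 0 = m \<and>
               (\<forall>i>0. (f i, f (i - 1)) \<in> mu_rel M \<sigma> \<mu> i)}"
proof (rule equalityI; rule subsetI)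
  fix m assume m: "m \<in> (\<Inter>i. mu_le M \<sigma> \<mu> i (carrier (M i)))"
  have mB: "\<forall>k. m \<in> Bset M \<sigma> \<mu> 0 k"
  proof
    fix k
    have "m \<in> mu_le M \<sigma> \<mu> k (carrier (M k))" using m by blast
    then obtain f where f: "f 0 = m" "f k \<in> carrier (M k)" "\<forall>i\<in>{1..k}. (f i, f (i - 1)) \<in> mu_rel M \<sigma> \<mu> i"
      unfolding mu_le_def by blast
    show "m \<in> Bset M \<sigma> \<mu> 0 k" using chain_B[OF f(3) f(2), of 0 k] f(1) by simp
  qed
  define g where "g = chainf M \<sigma> \<mu> m"
  have "\<forall>i. g i \<in> carrier (M i)"
  proof
    fix i show "g i \<in> carrier (M i)" using chainf_props[OF c mB, of i] unfolding g_def
      by (metis Bset.simps(1))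
  qed
  moreover have "g 0 = m" unfolding g_def by simp
  moreover have "\<forall>i>0. (g i, g (i - 1)) \<in> mu_rel M \<sigma> \<mu> i" using chainf_props[OF c mB] unfolding g_def by blast
  moreover have "m \<in> carrier (M 0)" using mB by (metis Bset.simps(1))
  ultimately show "m \<in> {m \<in> carrier (M 0). \<exists>f. (\<forall>i. f i \<in> carrier (M i)) \<and> f 0 = m \<and>
               (\<forall>i>0. (f i, f (i - 1)) \<in> mu_rel M \<sigma> \<mu> i)}" by blast
next
  fix m assume "m \<in> {m \<in> carrier (M 0). \<exists>f. (\<forall>i. f i \<in> carrier (M i)) \<and> f 0 = m \<and>
               (\<forall>i>0. (f i, f (i - 1)) \<in> mu_rel M \<sigma> \<mu> i)}"
  then obtain f where f: "\<forall>i. f i \<in> carrier (M i)" "f 0 = m" "\<forall>i>0. (f i, f (i - 1)) \<in> mu_rel M \<sigma> \<mu> i" by blast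
  have "m \<in> mu_le M \<sigma> \<mu> i (carrier (M i))" for i
    unfolding mu_le_def using f by (intro CollectI exI[of _ f]) auto
  then show "m \<in> (\<Inter>i. mu_le M \<sigma> \<mu> i (carrier (M i)))" by blast
qed

theorem lemma5p16:
  fixes R :: "'r ring" and Rf :: "nat \<Rightarrow> 'r set"
    and M :: "nat \<Rightarrow> ('r, 'm) module" and Mf :: "nat \<Rightarrow> nat \<Rightarrow> 'm set"
    and \<sigma> :: "nat \<Rightarrow> bool" and \<mu> :: "nat \<Rightarrow> 'm \<Rightarrow> 'm"
  assumes "filtered_ring R Rf"
    and "cch_ray_rep R Rf M Mf \<sigma> \<mu>"
  shows "(\<forall>i m. m \<in> carrier (M (Suc i)) \<longrightarrow>
            fm_closed (M i) (Mf i) (mu_img M \<sigma> \<mu> (Suc i) m) \<and>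
            (mu_img M \<sigma> \<mu> (Suc i) m \<noteq> {} \<longrightarrow> linear_variety R (M i) (mu_img M \<sigma> \<mu> (Suc i) m)))
       \<and> (\<forall>i N. submodule N R (M (Suc i)) \<and> fm_closed (M (Suc i)) (Mf (Suc i)) N \<longrightarrow>
            submodule (mu_img_set M \<sigma> \<mu> (Suc i) N) R (M i) \<and>
            fm_closed (M i) (Mf i) (mu_img_set M \<sigma> \<mu> (Suc i) N))
       \<and> (\<Inter>i. mu_le M \<sigma> \<mu> i (carrier (M i))) =
           {m \<in> carrier (M 0). \<exists>f. (\<forall>i. f i \<in> carrier (M i)) \<and> f 0 = m \<and>
               (\<forall>i>0. (f i, f (i - 1)) \<in> mu_rel M \<sigma> \<mu> i)}"
proof -
  have p1: "\<forall>i m. m \<in> carrier (M (Suc i)) \<longrightarrow>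
            fm_closed (M i) (Mf i) (mu_img M \<sigma> \<mu> (Suc i) m) \<and>
            (mu_img M \<sigma> \<mu> (Suc i) m \<noteq> {} \<longrightarrow> linear_variety R (M i) (mu_img M \<sigma> \<mu> (Suc i) m))"
    using part1[OF assms(2)] by blast
  have p2: "\<forall>i N. submodule N R (M (Suc i)) \<and> fm_closed (M (Suc i)) (Mf (Suc i)) N \<longrightarrow>
            submodule (mu_img_set M \<sigma> \<mu> (Suc i) N) R (M i) \<and>
            fm_closed (M i) (Mf i) (mu_img_set M \<sigma> \<mu> (Suc i) N)"
    using part2[OF assms(2)] by blast
  show ?thesis using p1 p2 part3[OF assms(2)] by blast
qed

end
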